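(* Assume (A1)–(A4) and $\eta_x,\eta_z>0$ (see context). Then for all $K\ge1$ there exists $j\in[K]$ such that $$\pi^j\le\sqrt{\frac{2(\Phi^1-\hat\Phi)}{\theta}\left(1+\frac{2(\theta+\tau_z)^2}{K\eta_z\rho}\right)}.$$
   Context: Let $T\ge1$, $[T]=\{1,\dots,T\}$; for $t\in[T]$: $X_t\subseteq\mathbb{R}^{n_t}$, $f_t:\mathbb{R}^{n_t}\to\mathbb{R}$, $A_t\in\mathbb{R}^{m\times n_t}$; $b\in\mathbb{R}^m$; $X=\prod_tX_t$, $A=[A_1\cdots A_T]$, $Ax=\sum_tA_tx_t$, $A_{\neq t}x_{\neq t}=\sum_{s\neq t}A_sx_s$; $\|w\|_M=\sqrt{w^\top Mw}$. Assumptions: (A1) $X_t$ nonempty compact; (A2) $f_t$ is $C^2$; (A3) $A$ full row rank; (A4) $\{x\in X:Ax=b\}\neq\emptyset$. Parameters $\rho,\theta,\tau_x,\tau_z>0$ with $\eta_x:=\frac{\tau_x}{4}-\frac{(T-1)\rho}{2}>0$, $\eta_z:=\frac{\tau_z}{4}-\frac{2(\theta+\tau_z)^2}{\rho}>0$. $\mathcal{L}(x,z,\lambda)=\sum_tf_t(x_t)+\frac{\theta}{2}\|z\|^2+\lambda^\top(Ax+z-b)+\frac{\rho}{2}\|Ax+z-b\|^2$. Jacobi scheme: given $x^0\in X$, $z^0,\lambda^0\in\mathbb{R}^m$, for $k\ge1$: (i) for each $t$, $x_t^k$ is a local minimizer, computed by a solver warm-started at $x_t^{k-1}$ (so that its subproblem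 objective does not exceed that of $x_t^{k-1}$), of $\min_{x_t\in X_t}f_t(x_t)+(\lambda^{k-1})^\top A_tx_t+\frac{\rho}{2}\|A_tx_t+A_{\neq t}x^{k-1}_{\neq t}+z^{k-1}-b\|^2+\frac{\tau_x}{2}\|x_t-x_t^{k-1}\|^2_{A_t^\top A_t}$; (ii) $z^k=(\tau_zz^{k-1}-\rho(Ax^k-b)-\lambda^{k-1})/(\tau_z+\rho+\theta)$; (iii) $\lambda^k=\lambda^{k-1}+\rho(Ax^k+z^k-b)$. $\Phi(x,z,\lambda,\hat x,\hat z)=\mathcal{L}(x,z,\lambda)+\frac{\tau_z}{4}\|z-\hat z\|^2+\sum_t\frac{\tau_x}{4}\|x_t-\hat x_t\|^2_{A_t^\top A_t}$; $\Phi^1=\Phi(x^1,z^1,\lambda^1,x^0,z^0)$; $\hat\Phi=\min_{x\in X}\sum_tf_t(x_t)$; $\pi^k=\|Ax^k-b\|$. *)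

theory Defs
  imports "HOL-Analysis.Analysis"
begin

text \<open>A vector of R^n is represented as a function v :: nat \<Rightarrow> real whose
coordinates are v 0, ..., v (n-1); block vectors of R^(n t) are required to vanish outside
{0..<n t} (the set Rn n below, with the product topology, which is homeomorphic to R^n).
Vectors of R^m (z, lambda, b, A x) are functions nat \<Rightarrow> real of which only the coordinates
i < m matter. The block matrix A_t in R^(m x n t) is given by its entries A t i j
(i < m, j < n t). Blocks are indexed by t in {1..T}.\<close>

definition Rn :: "nat \<Rightarrow> (nat \<Rightarrow> real) set" where
  "Rn n = {v. \<forall>i\<ge>n. v i = 0}"

definition C2_fun :: "nat \<Rightarrow> ((nat \<Rightarrow> real) \<Rightarrow> real) \<Rightarrow> bool" where
  "C2_fun n f \<longleftrightarrow> (\<exists>D1 D2.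
     (\<forall>i<n. \<forall>v\<in>Rn n. ((\<lambda>s. f (v(i := s))) has_real_derivative D1 i v) (at (v i))) \<and>
     (\<forall>i<n. \<forall>j<n. \<forall>v\<in>Rn n. ((\<lambda>s. D1 i (v(j := s))) has_real_derivative D2 i j v) (at (v j))) \<and>
     continuous_on (Rn n) f \<and>
     (\<forall>i<n. continuous_on (Rn n) (D1 i)) \<and>
     (\<forall>i<n. \<forall>j<n. continuous_on (Rn n) (D2 i j)))"

definition nsq :: "nat \<Rightarrow> (nat \<Rightarrow> real) \<Rightarrow> real" where
  "nsq m w = (\<Sum>i<m. (w i)\<^sup>2)"

definition ip :: "nat \<Rightarrow> (nat \<Rightarrow> real) \<Rightarrow> (nat \<Rightarrow> real) \<Rightarrow> real" where
  "ip m u w = (\<Sum>i<m. u i * w i)"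

definition mv :: "nat \<Rightarrow> (nat \<Rightarrow> nat \<Rightarrow> real) \<Rightarrow> (nat \<Rightarrow> real) \<Rightarrow> (nat \<Rightarrow> real)" where
  "mv nt M v = (\<lambda>i. \<Sum>j<nt. M i j * v j)"

definition Ax :: "nat \<Rightarrow> (nat \<Rightarrow> nat) \<Rightarrow> (nat \<Rightarrow> nat \<Rightarrow> nat \<Rightarrow> real) \<Rightarrow> (nat \<Rightarrow> nat \<Rightarrow> real) \<Rightarrow> (nat \<Rightarrow> real)" where
  "Ax T n A x = (\<lambda>i. \<Sum>t\<in>{1..T}. mv (n t) (A t) (x t) i)"

definition Ax_ne :: "nat \<Rightarrow> (nat \<Rightarrow> nat) \<Rightarrow> (nat \<Rightarrow> nat \<Rightarrow> nat \<Rightarrow> real) \<Rightarrow> (nat \<Rightarrow> nat \<Rightarrow> real) \<Rightarrow> nat \<Rightarrow> (nat \<Rightarrow> real)" where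
  "Ax_ne T n A x t = (\<lambda>i. \<Sum>s\<in>{1..T}-{t}. mv (n s) (A s) (x s) i)"

definition full_row_rank :: "nat \<Rightarrow> nat \<Rightarrow> (nat \<Rightarrow> nat) \<Rightarrow> (nat \<Rightarrow> nat \<Rightarrow> nat \<Rightarrow> real) \<Rightarrow> bool" where
  "full_row_rank m T n A \<longleftrightarrow>
     (\<forall>y::nat \<Rightarrow> real. (\<forall>t\<in>{1..T}. \<forall>j<n t. (\<Sum>i<m. y i * A t i j) = 0) \<longrightarrow> (\<forall>i<m. y i = 0))"

definition AL :: "nat \<Rightarrow> nat \<Rightarrow> (nat \<Rightarrow> nat) \<Rightarrow> (nat \<Rightarrow> (nat \<Rightarrow> real) \<Rightarrow> real) \<Rightarrow>
    (nat \<Rightarrow> nat \<Rightarrow> nat \<Rightarrow> real) \<Rightarrow> (nat \<Rightarrow> real) \<Rightarrow> real \<Rightarrow> real \<Rightarrow>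
    (nat \<Rightarrow> nat \<Rightarrow> real) \<Rightarrow> (nat \<Rightarrow> real) \<Rightarrow> (nat \<Rightarrow> real) \<Rightarrow> real" where
  "AL m T n f A b \<rho> \<theta> x z lam =
     (\<Sum>t\<in>{1..T}. f t (x t)) + \<theta> / 2 * nsq m z
     + ip m lam (\<lambda>i. Ax T n A x i + z i - b i)
     + \<rho> / 2 * nsq m (\<lambda>i. Ax T n A x i + z i - b i)"

definition Phi :: "nat \<Rightarrow> nat \<Rightarrow> (nat \<Rightarrow> nat) \<Rightarrow> (nat \<Rightarrow> (nat \<Rightarrow> real) \<Rightarrow> real) \<Rightarrow>
    (nat \<Rightarrow> nat \<Rightarrow> nat \<Rightarrow> real) \<Rightarrow> (nat \<Rightarrow> real) \<Rightarrow> real \<Rightarrow> real \<Rightarrow> real \<Rightarrow> real \<Rightarrow>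
    (nat \<Rightarrow> nat \<Rightarrow> real) \<Rightarrow> (nat \<Rightarrow> real) \<Rightarrow> (nat \<Rightarrow> real) \<Rightarrow>
    (nat \<Rightarrow> nat \<Rightarrow> real) \<Rightarrow> (nat \<Rightarrow> real) \<Rightarrow> real" where
  "Phi m T n f A b \<rho> \<theta> \<tau>x \<tau>z x z lam xh zh =
     AL m T n f A b \<rho> \<theta> x z lam + \<tau>z / 4 * nsq m (\<lambda>i. z i - zh i)
     + (\<Sum>t\<in>{1..T}. \<tau>x / 4 * nsq m (mv (n t) (A t) (\<lambda>j. x t j - xh t j)))"

definition subobj :: "nat \<Rightarrow> nat \<Rightarrow> (nat \<Rightarrow> nat) \<Rightarrow> (nat \<Rightarrow> (nat \<Rightarrow> real) \<Rightarrow> real) \<Rightarrow>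
    (nat \<Rightarrow> nat \<Rightarrow> nat \<Rightarrow> real) \<Rightarrow> (nat \<Rightarrow> real) \<Rightarrow> real \<Rightarrow> real \<Rightarrow>
    (nat \<Rightarrow> nat \<Rightarrow> real) \<Rightarrow> (nat \<Rightarrow> real) \<Rightarrow> (nat \<Rightarrow> real) \<Rightarrow> nat \<Rightarrow> (nat \<Rightarrow> real) \<Rightarrow> real" where
  "subobj m T n f A b \<rho> \<tau>x xp zp lp t y =
     f t y + ip m lp (mv (n t) (A t) y)
     + \<rho> / 2 * nsq m (\<lambda>i. mv (n t) (A t) y i + Ax_ne T n A xp t i + zp i - b i)
     + \<tau>x / 2 * nsq m (mv (n t) (A t) (\<lambda>j. y j - xp t j))"

text \<open>Local minimizer of g over S (neighbourhoods in the product topology, which on Rn n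
is the Euclidean topology).\<close>
definition local_min_on :: "((nat \<Rightarrow> real) \<Rightarrow> real) \<Rightarrow> (nat \<Rightarrow> real) set \<Rightarrow> (nat \<Rightarrow> real) \<Rightarrow> bool" where
  "local_min_on g S y \<longleftrightarrow> y \<in> S \<and> (\<exists>U. open U \<and> y \<in> U \<and> (\<forall>w\<in>S \<inter> U. g y \<le> g w))"

end

theory Submission
  imports Defs
begin

theorem proposition1:
  fixes T m :: nat and n :: "nat \<Rightarrow> nat"
    and X :: "nat \<Rightarrow> (nat \<Rightarrow> real) set"
    and f :: "nat \<Rightarrow> (nat \<Rightarrow> real) \<Rightarrow> real"
    and A :: "nat \<Rightarrow> nat \<Rightarrow> nat \<Rightarrow> real"
    and b :: "nat \<Rightarrow> real"
    and \<rho> \<theta> \<tau>x \<tau>z :: real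
    and x :: "nat \<Rightarrow> nat \<Rightarrow> nat \<Rightarrow> real"
    and z lam :: "nat \<Rightarrow> nat \<Rightarrow> real"
  assumes T: "T \<ge> 1"
    and A1: "\<forall>t\<in>{1..T}. X t \<noteq> {} \<and> compact (X t) \<and> X t \<subseteq> Rn (n t)"
    and A2: "\<forall>t\<in>{1..T}. C2_fun (n t) (f t)"
    and A3: "full_row_rank m T n A"
    and A4: "\<exists>y. (\<forall>t\<in>{1..T}. y t \<in> X t) \<and> (\<forall>i<m. Ax T n A y i = b i)"
    and params: "\<rho> > 0" "\<theta> > 0" "\<tau>x > 0" "\<tau>z > 0"
    and eta_x: "\<tau>x / 4 - (real T - 1) * \<rho> / 2 > 0"
    and eta_z: "\<tau>z / 4 - 2 * (\<theta> + \<tau>z)\<^sup>2 / \<rho> > 0"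
    and init: "\<forall>t\<in>{1..T}. x 0 t \<in> X t"
    and step_x: "\<forall>k\<ge>1. \<forall>t\<in>{1..T}.
        local_min_on (subobj m T n f A b \<rho> \<tau>x (x (k-1)) (z (k-1)) (lam (k-1)) t) (X t) (x k t)
        \<and> subobj m T n f A b \<rho> \<tau>x (x (k-1)) (z (k-1)) (lam (k-1)) t (x k t)
          \<le> subobj m T n f A b \<rho> \<tau>x (x (k-1)) (z (k-1)) (lam (k-1)) t (x (k-1) t)"
    and step_z: "\<forall>k\<ge>1. \<forall>i<m. z k i =
        (\<tau>z * z (k-1) i - \<rho> * (Ax T n A (x k) i - b i) - lam (k-1) i) / (\<tau>z + \<rho> + \<theta>)"
    and step_lam: "\<forall>k\<ge>1. \<forall>i<m. lam k i = lam (k-1) i + \<rho> * (Ax T n A (x k) i + z k i - b i)"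
  shows "\<forall>K::nat\<ge>1. \<exists>j\<in>{1..K}.
     sqrt (nsq m (\<lambda>i. Ax T n A (x j) i - b i))
     \<le> sqrt (2 * (Phi m T n f A b \<rho> \<theta> \<tau>x \<tau>z (x 1) (z 1) (lam 1) (x 0) (z 0)
                 - Inf {\<Sum>t\<in>{1..T}. f t (y t) | y. \<forall>t\<in>{1..T}. y t \<in> X t}) / \<theta>
             * (1 + 2 * (\<theta> + \<tau>z)\<^sup>2 / (real K * (\<tau>z / 4 - 2 * (\<theta> + \<tau>z)\<^sup>2 / \<rho>) * \<rho>)))"
  proof (intro allI impI)
  fix K :: nat assume K: "K \<ge> 1"
  define w where "w = (\<lambda>i. Ax T n A (x 1) i - b i)"
  define r where "r = (\<lambda>i. Ax T n A (x 1) i + z 1 i - b i)"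
  define dz where "dz = (\<lambda>i. z 1 i - z 0 i)"
  define S where "S = {\<Sum>t\<in>{1..T}. f t (y t) | y. \<forall>t\<in>{1..T}. y t \<in> X t}"
  define P where "P = Phi m T n f A b \<rho> \<theta> \<tau>x \<tau>z (x 1) (z 1) (lam 1) (x 0) (z 0)"
  have rho_big: "\<rho> \<ge> \<theta> + 2 * \<tau>z"
  proof -
    have "\<tau>z * \<rho> > 8 * (\<theta> + \<tau>z)\<^sup>2"
    proof -
      have "2 * (\<theta> + \<tau>z)\<^sup>2 / \<rho> < \<tau>z / 4" using eta_z by simp
      hence "2 * (\<theta> + \<tau>z)\<^sup>2 < \<tau>z / 4 * \<rho>" using params(1) by (simp add: divide_less_eq)
      thus ?thesis by simp
    qed
    moreover have "\<tau>z * (\<theta> + 2 * \<tau>z) \<le> 8 * (\<theta> + \<tau>z)\<^sup>2"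
      using params by (simp add: power2_eq_square algebra_simps)
    ultimately have "\<tau>z * (\<theta> + 2 * \<tau>z) < \<tau>z * \<rho>" by linarith
    thus ?thesis using params(4) by simp
  qed
  have coord: "\<theta>/2 * (w i)\<^sup>2 \<le> \<theta>/2 * (z 1 i)\<^sup>2 + lam 1 i * r i + \<rho>/2 * (r i)\<^sup>2 + \<tau>z/4 * (dz i)\<^sup>2"
    if i: "i < m" for i
  proof -
    have sz: "z 1 i * (\<tau>z + \<rho> + \<theta>) = \<tau>z * z 0 i - \<rho> * (Ax T n A (x 1) i - b i) - lam 0 i"
      using step_z i params by auto
    have sl: "lam 1 i = lam 0 i + \<rho> * (Ax T n A (x 1) i + z 1 i - b i)"
      using step_lam i by auto
    have l: "lam 1 i = - \<theta> * z 1 i - \<tau>z * dz i"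
      using sz sl unfolding dz_def by (simp add: algebra_simps)
    have wr: "w i = r i - z 1 i" unfolding w_def r_def by simp
    have "\<theta>/2 * (z 1 i)\<^sup>2 + lam 1 i * r i + \<rho>/2 * (r i)\<^sup>2 + \<tau>z/4 * (dz i)\<^sup>2 - \<theta>/2 * (w i)\<^sup>2
        = \<tau>z/4 * (dz i - 2 * r i)\<^sup>2 + ((\<rho> - \<theta>)/2 - \<tau>z) * (r i)\<^sup>2"
      unfolding l wr by (simp add: power2_eq_square field_simps)
    moreover have "0 \<le> \<tau>z/4 * (dz i - 2 * r i)\<^sup>2" using params by simp
    moreover have "0 \<le> ((\<rho> - \<theta>)/2 - \<tau>z) * (r i)\<^sup>2" using rho_big by simp
    ultimately show ?thesis by linarith
  qed
  have sumq: "\<theta>/2 * nsq m w \<le> \<theta>/2 * nsq m (z 1) + ip m (lam 1) r + \<rho>/2 * nsq m r + \<tau>z/4 * nsq m dz"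
  proof -
    have "(\<Sum>i<m. \<theta>/2 * (w i)\<^sup>2) \<le> (\<Sum>i<m. \<theta>/2 * (z 1 i)\<^sup>2 + lam 1 i * r i + \<rho>/2 * (r i)\<^sup>2 + \<tau>z/4 * (dz i)\<^sup>2)"
      by (rule sum_mono) (use coord in auto)
    thus ?thesis unfolding nsq_def ip_def by (simp add: sum.distrib sum_distrib_left)
  qed
  have x1: "\<forall>t\<in>{1..T}. x 1 t \<in> X t"
    using step_x unfolding local_min_on_def by auto
  have bdd: "bdd_below S"
  proof -
    have "\<exists>c. \<forall>v\<in>X t. c \<le> f t v" if t: "t \<in> {1..T}" for t
    proof -
      have "continuous_on (Rn (n t)) (f t)" using A2 t unfolding C2_fun_def by blast
      hence "continuous_on (X t) (f t)" using A1 t continuous_on_subset by blast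
      hence "compact (f t ` X t)" using A1 t compact_continuous_image by blast
      hence "bdd_below (f t ` X t)" by (rule bounded_imp_bdd_below[OF compact_imp_bounded])
      thus ?thesis by (auto simp: bdd_below_def)
    qed
    then obtain c where c: "\<And>t v. t \<in> {1..T} \<Longrightarrow> v \<in> X t \<Longrightarrow> c t \<le> f t v" by metis
    have "(\<Sum>t\<in>{1..T}. c t) \<le> s" if "s \<in> S" for s
    proof -
      from that obtain y where s: "s = (\<Sum>t\<in>{1..T}. f t (y t))" and y: "\<forall>t\<in>{1..T}. y t \<in> X t"
        unfolding S_def by blast
      show ?thesis unfolding s by (rule sum_mono) (use c y in auto)
    qed
    thus ?thesis by (auto simp: bdd_below_def)
  qed
  have inf: "Inf S \<le> (\<Sum>t\<in>{1..T}. f t (x 1 t))"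
    by (rule cInf_lower) (use x1 bdd in \<open>auto simp: S_def\<close>)
  have xs: "0 \<le> (\<Sum>t\<in>{1..T}. \<tau>x / 4 * nsq m (mv (n t) (A t) (\<lambda>j. x 1 t j - x 0 t j)))"
    by (rule sum_nonneg) (use params in \<open>auto simp: nsq_def intro!: sum_nonneg mult_nonneg_nonneg\<close>)
  have P_eq: "P = (\<Sum>t\<in>{1..T}. f t (x 1 t)) + (\<theta>/2 * nsq m (z 1) + ip m (lam 1) r + \<rho>/2 * nsq m r + \<tau>z/4 * nsq m dz)
     + (\<Sum>t\<in>{1..T}. \<tau>x / 4 * nsq m (mv (n t) (A t) (\<lambda>j. x 1 t j - x 0 t j)))"
    unfolding P_def Phi_def AL_def r_def dz_def by simp
  have main: "\<theta>/2 * nsq m w \<le> P - Inf S" using P_eq sumq inf xs by linarith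
  have nn: "0 \<le> nsq m w" unfolding nsq_def by (auto intro!: sum_nonneg)
  have q: "nsq m w \<le> 2 * (P - Inf S) / \<theta>" using main params(2) by (simp add: field_simps)
  have c0: "0 \<le> 2 * (\<theta> + \<tau>z)\<^sup>2 / (real K * (\<tau>z / 4 - 2 * (\<theta> + \<tau>z)\<^sup>2 / \<rho>) * \<rho>)"
    using eta_z params K by (intro divide_nonneg_pos) auto
  have "nsq m w \<le> 2 * (P - Inf S) / \<theta> * (1 + 2 * (\<theta> + \<tau>z)\<^sup>2 / (real K * (\<tau>z / 4 - 2 * (\<theta> + \<tau>z)\<^sup>2 / \<rho>) * \<rho>))"
  proof -
    have "0 \<le> 2 * (P - Inf S) / \<theta>" using q nn by linarith
    hence "2 * (P - Inf S) / \<theta> * 1 \<le> 2 * (P - Inf S) / \<theta> * (1 + 2 * (\<theta> + \<tau>z)\<^sup>2 / (real K * (\<tau>z / 4 - 2 * (\<theta> + \<tau>z)\<^sup>2 / \<rho>) * \<rho>))"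
      using c0 by (intro mult_left_mono) auto
    thus ?thesis using q by linarith
  qed
  hence "sqrt (nsq m w) \<le> sqrt (2 * (P - Inf S) / \<theta> * (1 + 2 * (\<theta> + \<tau>z)\<^sup>2 / (real K * (\<tau>z / 4 - 2 * (\<theta> + \<tau>z)\<^sup>2 / \<rho>) * \<rho>)))"
    by simp
  moreover have "(1::nat) \<in> {1..K}" using K by simp
  ultimately show "\<exists>j\<in>{1..K}.
     sqrt (nsq m (\<lambda>i. Ax T n A (x j) i - b i))
     \<le> sqrt (2 * (Phi m T n f A b \<rho> \<theta> \<tau>x \<tau>z (x 1) (z 1) (lam 1) (x 0) (z 0)
                 - Inf {\<Sum>t\<in>{1..T}. f t (y t) | y. \<forall>t\<in>{1..T}. y t \<in> X t}) / \<theta>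
             * (1 + 2 * (\<theta> + \<tau>z)\<^sup>2 / (real K * (\<tau>z / 4 - 2 * (\<theta> + \<tau>z)\<^sup>2 / \<rho>) * \<rho>)))"
    unfolding w_def P_def S_def by blast
qed

end
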